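(* Let $d\ge2$ and let $\mathcal{G}$ be a stochastic subgroup of $\mathrm{O}(d^2)$. Then there exists a qplex $Q$ such that $\mathcal{G}\subseteq\mathcal{G}(Q)$ (in particular $RQ=Q$ for all $R\in\mathcal{G}$).
   Context: Fix an integer $d\ge 2$. $\mathrm{O}(d^2)$ is the group of real orthogonal $d^2\times d^2$ matrices. $\langle\cdot,\cdot\rangle$ is the standard inner product on $\mathbb{R}^{d^2}$, $\|\cdot\|$ the Euclidean norm. $\Delta=\{p\in\mathbb{R}^{d^2}: p(i)\ge0,\ \sum_ip(i)=1\}$; $H=\{u\in\mathbb{R}^{d^2}:\sum_i u(i)=1\}$; $c=(1/d^2,\dots,1/d^2)$. For $A\subseteq H$ the polar is $A^*=\{u\in H:\langle u,v\rangle\ge\frac{1}{d(d+1)}\ \forall v\in A\}$. Out-ball $B_{\rm o}=\{u\in H:\|u-c\|\le r_{\rm o}\}$, $r_{\rm o}^2=\frac{d-1}{d^2(d+1)}$. A qplex is a set $Q\subseteq\Delta\cap B_{\rm o}$ with $Q^*=Q$. A measurement is an array $r(i|j)\ge0$, $i,j\in\{1,\dots,d^2\}$, with $\sum_i r(i|j)=1$ for every $j$; for $q\in Q$, $q_r(i)=\sum_j[(d+1)q(j)-\frac1d]r(i|j)$; it is $Q$-preserving if $\{q_r:q\in Q\}=Q$; its stretched measurement matrix is $R_{ij}=(d+1)r(i|j)-\frac1d\sum_k r(i|k)$. The preservation group $\mathcal{G}(Q)$ is the set of stretched measurement matrices of $Q$-preserving measurements. A subgroup $\mathcal{G}\subseteq\mathrm{O}(d^2)$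 is stochastic if every $R\in\mathcal{G}$ satisfies $R_{ij}\ge-\frac1d$ for all $i,j$ and $Rc=c$. *)

theory Defs
  imports "HOL-Analysis.Analysis"
begin

text \<open>Vectors in R^(d^2) are modelled as real^'n with CARD('n) = d^2;
  d^2 x d^2 matrices as real^'n^'n (row index first).\<close>

definition cvec :: "real^'n" where
  "cvec = (\<chi> i. 1 / real CARD('n))"

definition Hplane :: "(real^'n) set" where
  "Hplane = {u. (\<Sum>i\<in>UNIV. u $ i) = 1}"

definition Simplex :: "(real^'n) set" where
  "Simplex = {p. (\<forall>i. p $ i \<ge> 0) \<and> (\<Sum>i\<in>UNIV. p $ i) = 1}"

definition polar :: "nat \<Rightarrow> (real^'n) set \<Rightarrow> (real^'n) set" where
  "polar d A = {u \<in> Hplane. \<forall>v\<in>A. inner u v \<ge> 1 / (real d * (real d + 1))}"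

definition out_radius_sq :: "nat \<Rightarrow> real" where
  "out_radius_sq d = (real d - 1) / ((real d)^2 * (real d + 1))"

definition out_ball :: "nat \<Rightarrow> (real^'n) set" where
  "out_ball d = {u \<in> Hplane. (norm (u - cvec))^2 \<le> out_radius_sq d}"

definition qplex :: "nat \<Rightarrow> (real^'n) set \<Rightarrow> bool" where
  "qplex d Q \<longleftrightarrow> Q \<subseteq> Simplex \<inter> out_ball d \<and> polar d Q = Q"

text \<open>A measurement r(i|j) = r $ i $ j.\<close>
definition measurement :: "real^'n^'n \<Rightarrow> bool" where
  "measurement r \<longleftrightarrow> (\<forall>i j. r $ i $ j \<ge> 0) \<and> (\<forall>j. (\<Sum>i\<in>UNIV. r $ i $ j) = 1)"

definition meas_apply :: "nat \<Rightarrow> real^'n^'n \<Rightarrow> real^'n \<Rightarrow> real^'n" where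
  "meas_apply d r q = (\<chi> i. \<Sum>j\<in>UNIV. ((real d + 1) * q $ j - 1 / real d) * r $ i $ j)"

definition Q_preserving :: "nat \<Rightarrow> (real^'n) set \<Rightarrow> real^'n^'n \<Rightarrow> bool" where
  "Q_preserving d Q r \<longleftrightarrow> measurement r \<and> (meas_apply d r) ` Q = Q"

definition stretched :: "nat \<Rightarrow> real^'n^'n \<Rightarrow> real^'n^'n" where
  "stretched d r = (\<chi> i j. (real d + 1) * r $ i $ j - (1 / real d) * (\<Sum>k\<in>UNIV. r $ i $ k))"

definition preservation_group :: "nat \<Rightarrow> (real^'n) set \<Rightarrow> (real^'n^'n) set" where
  "preservation_group d Q = {stretched d r | r. Q_preserving d Q r}"

definition orth_subgroup :: "(real^'n^'n) set \<Rightarrow> bool" where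
  "orth_subgroup G \<longleftrightarrow> (\<forall>R\<in>G. orthogonal_matrix R) \<and> mat 1 \<in> G
     \<and> (\<forall>R\<in>G. \<forall>S\<in>G. R ** S \<in> G) \<and> (\<forall>R\<in>G. matrix_inv R \<in> G)"

definition stochastic_subgroup :: "nat \<Rightarrow> (real^'n^'n) set \<Rightarrow> bool" where
  "stochastic_subgroup d G \<longleftrightarrow> orth_subgroup G \<and>
     (\<forall>R\<in>G. (\<forall>i j. R $ i $ j \<ge> - 1 / real d) \<and> R *v cvec = cvec)"

end

theory Submission
  imports Defs
begin

lemma a1: fixes x :: real assumes "x \<ge> 2" shows "(1 - 1 / x^2) / (x + 1)^2 = (x - 1) * (1 / (x^2 * (x+1)))"
proof -
  have "x > 0" "x + 1 > 0" using assms by auto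
  then show ?thesis by (simp add: divide_simps) algebra
qed
lemma a2: fixes x :: real assumes "x \<ge> 2" shows "(- 1 / x - 1 / x^2) / (x + 1) = - 1 / x^2"
proof -
  have "x > 0" "x + 1 > 0" using assms by auto
  then show ?thesis by (simp add: divide_simps) algebra
qed
lemma a3: fixes x :: real assumes "x \<ge> 2" shows "(1 / (x^2 * (x+1))) / (x - 1) * (1 - 1 / x^2) = (1 / x^2)^2"
proof -
  have "x > 0" "x - 1 > 0" "x + 1 > 0" using assms by auto
  then show ?thesis by (simp add: divide_simps) algebra
qed
lemma a4: fixes x :: real assumes "x \<ge> 2" shows "0 \<le> 1 - 1 / x^2"
proof -
  have "1 \<le> x^2" using assms by (metis dual_order.trans one_le_numeral one_le_power)
  then have "1 / x^2 \<le> 1" by (simp add: divide_le_eq)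
  then show ?thesis by simp
qed

lemma b1: fixes k a b :: real assumes "k > 0" "b > 0" "a > b"
  shows "(2*k/(a+b))^2 * a \<le> k*k/b" "(2*k/(a+b)) * a > k"
proof -
  have ab: "a + b > 0" using assms by simp
  have e: "(a+b)^2 - 4*a*b = (a-b)^2" by algebra
  have "4*a*b \<le> (a+b)^2" using e zero_le_power2[of "a-b"] by linarith
  then have h: "4*a*b*(k*k) \<le> (a+b)^2*(k*k)" by (rule mult_right_mono) simp
  have "(2*k/(a+b))^2 * a * b = (4*a*b*(k*k)) / (a+b)^2"
    by (simp add: power_divide power2_eq_square)
  also have "\<dots> \<le> k * k" using h ab by (simp add: divide_le_eq mult.commute)
  finally have "(2*k/(a+b))^2 * a * b \<le> k*k" .
  then show "(2*k/(a+b))^2 * a \<le> k*k/b" using assms by (simp add: le_divide_eq)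
  have "k * (a+b) < 2*k*a" using assms by simp
  then show "(2*k/(a+b)) * a > k" using ab by (simp add: divide_simps)
qed

lemma a5: fixes x :: real assumes "x \<ge> 2" shows "1 / (x * (x+1)) = - (1 / (x^2 * (x+1))) + 1 / x^2"
proof -
  have "x > 0" "x + 1 > 0" using assms by auto
  then show ?thesis by (simp add: divide_simps) algebra
qed
lemma a6: fixes x q R :: real assumes "x \<ge> 2"
  shows "((x + 1) * q - 1 / x) * ((R + 1 / x) / (x + 1)) = q * R + q / x - R / (x * (x+1)) - 1 / (x^2 * (x+1))"
proof -
  have "x > 0" "x + 1 > 0" using assms by auto
  then show ?thesis by (simp add: divide_simps) algebra
qed
lemma a7: fixes x :: real assumes "x \<ge> 2"
  shows "1 / x - 1 / (x * (x+1)) - x^2 / (x^2 * (x+1)) = 0"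
proof -
  have "x > 0" "x + 1 > 0" using assms by auto
  then show ?thesis by (simp add: divide_simps)
qed
lemma a8: fixes x :: real assumes "x \<ge> 2"
  shows "(1 + x^2 / x) / (x + 1) = 1"
proof -
  have "x > 0" "x + 1 > 0" using assms by auto
  then show ?thesis by (simp add: divide_simps) algebra
qed
lemma a9: fixes x R :: real assumes "x \<ge> 2"
  shows "(x + 1) * ((R + 1 / x) / (x + 1)) - 1 / x * 1 = R"
proof -
  have "x > 0" "x + 1 > 0" using assms by auto
  then show ?thesis by (simp add: divide_simps)
qed

lemma orth_inner:
  fixes R :: "real^'n^'n"
  assumes "orthogonal_matrix R"
  shows "inner (R *v x) (R *v y) = inner x y"
proof -
  have "inner (R *v x) (R *v y) = inner x (transpose R *v (R *v y))"
    by (metis dot_lmul_matrix vector_transpose_matrix)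
  also have "\<dots> = inner x y"
    using assms by (simp add: matrix_vector_mul_assoc orthogonal_matrix_def del: transpose_matrix_vector)
  finally show ?thesis .
qed

lemma orth_norm:
  fixes R :: "real^'n^'n"
  assumes "orthogonal_matrix R"
  shows "norm (R *v x) = norm x"
  using orth_inner[OF assms, of x x] by (simp add: norm_eq_sqrt_inner)

lemma orth_inv:
  fixes R :: "real^'n^'n"
  assumes "orthogonal_matrix R"
  shows "R ** matrix_inv R = mat 1" "matrix_inv R ** R = mat 1"
proof -
  have "\<exists>A'. R ** A' = mat 1 \<and> A' ** R = mat 1"
    using assms unfolding orthogonal_matrix_def by blast
  from someI_ex[OF this] show "R ** matrix_inv R = mat 1" "matrix_inv R ** R = mat 1"
    unfolding matrix_inv_def by auto
qed

lemma inner_cvec: "inner (cvec::real^'n) x = (\<Sum>i\<in>UNIV. x $ i) / real CARD('n)"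
  by (simp add: cvec_def inner_vec_def sum_divide_distrib)

lemma sum_cvec: "(\<Sum>i\<in>UNIV. x $ i) = real CARD('n) * inner (cvec::real^'n) x"
  by (simp add: inner_cvec)

lemma inner_cvec_cvec: "inner (cvec::real^'n) cvec = 1 / real CARD('n)"
  using inner_cvec[of "cvec::real^'n"] by (simp add: cvec_def)

lemma cvec_nth: "(cvec::real^'n) $ i = 1 / real CARD('n)"
  by (simp add: cvec_def)

lemma inner_axis_cvec: "inner (axis j 1) (cvec::real^'n) = 1 / real CARD('n)"
  by (simp add: inner_axis' cvec_nth)

definition kk :: "nat \<Rightarrow> real" where "kk d = 1 / ((real d)^2 * (real d + 1))"
definition Vc :: "(real^'n) set" where "Vc = {x. inner cvec x = 0}"
definition cpol :: "real \<Rightarrow> (real^'n) set \<Rightarrow> (real^'n) set" where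
  "cpol k S = {y \<in> Vc. \<forall>x\<in>S. inner y x \<ge> - k}"
definition Dset :: "nat \<Rightarrow> (real^'n) set" where
  "Dset d = {x \<in> Vc. (\<forall>i. x $ i \<ge> - 1 / (real d)^2) \<and> (norm x)^2 \<le> (real d - 1) * kk d}"
definition BallS :: "nat \<Rightarrow> (real^'n) set" where
  "BallS d = {x \<in> Vc. (norm x)^2 \<le> kk d / (real d - 1)}"
definition vj :: "nat \<Rightarrow> 'n \<Rightarrow> real^'n" where
  "vj d j = (1 / (real d + 1)) *\<^sub>R (axis j 1 - cvec)"
definition PS :: "nat \<Rightarrow> (real^'n^'n) set \<Rightarrow> (real^'n) set" where
  "PS d G = {R *v vj d j | R j. R \<in> G}"
definition Fam :: "nat \<Rightarrow> (real^'n^'n) set \<Rightarrow> (real^'n) set set" where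
  "Fam d G = {S. BallS d \<union> PS d G \<subseteq> S \<and> S \<subseteq> Dset d \<and>
      (\<forall>x\<in>S. \<forall>y\<in>S. inner x y \<ge> - kk d) \<and> (\<forall>R\<in>G. \<forall>x\<in>S. R *v x \<in> S)}"

context
  fixes d :: nat and G :: "(real^'n^'n) set"
  assumes d2: "d \<ge> 2" and cardN: "CARD('n) = d^2" and stoch: "stochastic_subgroup d G"
begin

lemma cardR: "real CARD('n) = (real d)^2"
  using cardN by simp

lemma G_orth: "R \<in> G \<Longrightarrow> orthogonal_matrix R"
  using stoch by (auto simp: stochastic_subgroup_def orth_subgroup_def)
lemma G_c: "R \<in> G \<Longrightarrow> R *v cvec = cvec"
  using stoch by (auto simp: stochastic_subgroup_def)
lemma G_ent: "R \<in> G \<Longrightarrow> R $ i $ j \<ge> - 1 / real d"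
  using stoch by (auto simp: stochastic_subgroup_def)
lemma G_one: "mat 1 \<in> G"
  using stoch by (auto simp: stochastic_subgroup_def orth_subgroup_def)
lemma G_mul: "R \<in> G \<Longrightarrow> S \<in> G \<Longrightarrow> R ** S \<in> G"
  using stoch by (auto simp: stochastic_subgroup_def orth_subgroup_def)
lemma G_inv: "R \<in> G \<Longrightarrow> matrix_inv R \<in> G"
  using stoch by (auto simp: stochastic_subgroup_def orth_subgroup_def)

lemma G_inner: "R \<in> G \<Longrightarrow> inner (R *v x) (R *v y) = inner x y"
  by (simp add: G_orth orth_inner)
lemma G_norm: "R \<in> G \<Longrightarrow> norm (R *v x) = norm x"
  by (simp add: G_orth orth_norm)
lemma G_cancel: "R \<in> G \<Longrightarrow> R *v (matrix_inv R *v x) = x"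
  by (simp add: G_orth orth_inv matrix_vector_mul_assoc)
lemma G_cancel2: "R \<in> G \<Longrightarrow> matrix_inv R *v (R *v x) = x"
  by (simp add: G_orth orth_inv matrix_vector_mul_assoc)
lemma G_adj: "R \<in> G \<Longrightarrow> inner (R *v x) z = inner x (matrix_inv R *v z)"
  by (metis G_cancel G_inner)
lemma G_cinner: "R \<in> G \<Longrightarrow> inner cvec (R *v x) = inner cvec x"
  by (metis G_c G_inner)
lemma G_Vc: "R \<in> G \<Longrightarrow> x \<in> Vc \<Longrightarrow> R *v x \<in> Vc"
  by (simp add: Vc_def G_cinner)

lemma G_colsum: "R \<in> G \<Longrightarrow> (\<Sum>i\<in>UNIV. R $ i $ j) = 1"
proof -
  assume R: "R \<in> G"
  have "(\<Sum>i\<in>UNIV. R $ i $ j) = (\<Sum>i\<in>UNIV. (R *v axis j 1) $ i)"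
    by (simp add: matrix_vector_mult_basis column_def)
  also have "\<dots> = real CARD('n) * inner cvec (R *v axis j 1)" by (rule sum_cvec)
  also have "\<dots> = real CARD('n) * inner cvec (axis j 1)" using R by (simp add: G_cinner)
  also have "\<dots> = 1" using inner_axis_cvec[of j] by (simp add: inner_commute)
  finally show ?thesis .
qed

lemma G_rowsum: "R \<in> G \<Longrightarrow> (\<Sum>j\<in>UNIV. R $ i $ j) = 1"
proof -
  assume R: "R \<in> G"
  have "(R *v cvec) $ i = (\<Sum>j\<in>UNIV. R $ i $ j) / real CARD('n)"
    by (simp add: matrix_vector_mult_def cvec_def sum_divide_distrib)
  then show ?thesis using G_c[OF R] by (simp add: cvec_nth)
qed


lemma kk_pos: "kk d > 0" using d2 by (simp add: kk_def)

lemma vj_Vc: "vj d j \<in> Vc"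
  by (simp add: Vc_def vj_def inner_diff_right inner_commute[of cvec "axis j 1"] inner_axis_cvec inner_cvec_cvec)

lemma inner_vj: "x \<in> Vc \<Longrightarrow> inner (vj d j) x = x $ j / (real d + 1)"
  by (simp add: Vc_def vj_def inner_diff_left inner_axis')

lemma axis_c_sq: "inner (axis j 1 - cvec) (axis j 1 - (cvec::real^'n)) = 1 - 1 / real CARD('n)"
  by (simp add: inner_diff_left inner_diff_right inner_axis_cvec inner_commute[of cvec "axis j 1"] inner_cvec_cvec)

lemma norm_vj_sq: "(norm (vj d (j::'n)))^2 = (real d - 1) * kk d"
proof -
  have "(norm (vj d j))^2 = inner (vj d j) (vj d j)" by (simp add: power2_norm_eq_inner)
  also have "\<dots> = (1 - 1 / (real d)^2) / (real d + 1)^2"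
    by (simp add: vj_def axis_c_sq[of j, unfolded cardR] power2_eq_square)
  also have "\<dots> = (real d - 1) * kk d"
    unfolding kk_def by (rule a1) (use d2 in simp)
  finally show ?thesis .
qed

lemma Rvj_nth: "R \<in> G \<Longrightarrow> (R *v vj d j) $ i \<ge> - 1 / (real d)^2"
proof -
  assume R: "R \<in> G"
  have "R *v vj d j = (1 / (real d + 1)) *\<^sub>R (R *v axis j 1 - R *v cvec)"
    by (simp add: vj_def matrix_vector_mult_scaleR matrix_vector_mult_diff_distrib)
  then have e: "(R *v vj d j) $ i = (R $ i $ j - 1 / (real d)^2) / (real d + 1)"
    using G_c[OF R] by (simp add: matrix_vector_mult_basis column_def cvec_nth cardR)
  have "R $ i $ j \<ge> - 1 / real d" using G_ent[OF R] .
  moreover have "(- 1 / real d - 1 / (real d)^2) / (real d + 1) = - 1 / (real d)^2"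
    by (rule a2) (use d2 in simp)
  ultimately have "(R $ i $ j - 1 / (real d)^2) / (real d + 1) \<ge> (- 1 / real d - 1 / (real d)^2) / (real d + 1)"
    by (intro divide_right_mono) auto
  then show ?thesis unfolding e using \<open>(- 1 / real d - 1 / (real d)^2) / (real d + 1) = - 1 / (real d)^2\<close> by simp
qed

lemma coord_bound: "(x::real^'n) \<in> Vc \<Longrightarrow> (x $ i)^2 \<le> (norm x)^2 * (1 - 1 / real CARD('n))"
proof -
  assume x: "x \<in> Vc"
  have "x $ i = inner (axis i 1 - cvec) x"
    using x by (simp add: Vc_def inner_diff_left inner_axis')
  then have "\<bar>x $ i\<bar> \<le> norm (axis i 1 - cvec) * norm x"
    by (metis Cauchy_Schwarz_ineq2)
  then have "\<bar>x $ i\<bar>^2 \<le> (norm (axis i 1 - cvec) * norm x)^2"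
    by (rule power_mono) simp
  then have "(x $ i)^2 \<le> (norm (axis i 1 - cvec) * norm x)^2"
    by (simp only: power2_abs)
  also have "\<dots> = (norm x)^2 * (1 - 1 / real CARD('n))"
    by (simp add: power_mult_distrib power2_norm_eq_inner axis_c_sq[of i])
  finally show ?thesis .
qed

lemma pair_bound:
  assumes "(norm x)^2 * (norm y)^2 \<le> (kk d)^2"
  shows "inner x y \<ge> - kk d"
proof -
  have "- inner x y \<le> norm x * norm y"
    using norm_cauchy_schwarz[of "-x" y] by simp
  also have "norm x * norm y \<le> kk d"
  proof (rule power2_le_imp_le)
    show "(norm x * norm y)^2 \<le> (kk d)^2" using assms by (simp only: power_mult_distrib)
    show "0 \<le> kk d" using kk_pos by (rule less_imp_le)
  qed
  finally show ?thesis by simp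
qed

lemma BallS_D: "BallS d \<subseteq> (Dset d :: (real^'n) set)"
proof
  fix x :: "real^'n" assume x: "x \<in> BallS d"
  then have xV: "x \<in> Vc" and nx: "(norm x)^2 \<le> kk d / (real d - 1)" by (auto simp: BallS_def)
  have dd: "real d \<ge> 2" using d2 by simp
  have "kk d / (real d - 1) \<le> (real d - 1) * kk d"
  proof -
    have a: "kk d * 1 \<le> kk d * (real d - 1)"
      by (rule mult_left_mono) (use dd kk_pos in auto)
    have "kk d / (real d - 1) \<le> kk d"
      by (subst pos_divide_le_eq) (use dd a in auto)
    also have "kk d \<le> (real d - 1) * kk d" using a by (simp add: mult.commute)
    finally show ?thesis .
  qed
  have "\<forall>i. x $ i \<ge> - 1 / (real d)^2"
  proof
    fix i
    have "(x $ i)^2 \<le> (norm x)^2 * (1 - 1 / real CARD('n))" by (rule coord_bound[OF xV])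
    also have "\<dots> \<le> kk d / (real d - 1) * (1 - 1 / (real d)^2)"
      unfolding cardR by (rule mult_right_mono) (use nx a4[OF dd] in auto)
    also have "\<dots> = (1 / (real d)^2)^2"
      unfolding kk_def by (rule a3) (use dd in simp)
    finally have sq: "(x $ i)^2 \<le> (1 / (real d)^2)^2" .
    have "\<bar>x $ i\<bar> \<le> 1 / (real d)^2"
    proof (rule power2_le_imp_le)
      show "\<bar>x $ i\<bar>^2 \<le> (1 / (real d)^2)^2" using sq by (simp only: power2_abs)
    qed simp
    then show "x $ i \<ge> - 1 / (real d)^2" by simp
  qed
  then show "x \<in> Dset d"
    using xV nx \<open>kk d / (real d - 1) \<le> (real d - 1) * kk d\<close> by (auto simp: Dset_def)
qed


lemma kk_le: "kk d / (real d - 1) \<le> kk d" "kk d \<le> (real d - 1) * kk d" "0 \<le> kk d / (real d - 1)"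
proof -
  have dd: "real d \<ge> 2" using d2 by simp
  have a: "kk d * 1 \<le> kk d * (real d - 1)"
    by (rule mult_left_mono) (use dd kk_pos in auto)
  show "kk d / (real d - 1) \<le> kk d"
    by (subst pos_divide_le_eq) (use dd a in auto)
  show "kk d \<le> (real d - 1) * kk d" using a by (simp add: mult.commute)
  show "0 \<le> kk d / (real d - 1)" using dd kk_pos by simp
qed

lemma PS_D: "PS d G \<subseteq> Dset d"
proof
  fix y assume "y \<in> PS d G"
  then obtain R j where R: "R \<in> G" and y: "y = R *v vj d j" by (auto simp: PS_def)
  have "y \<in> Vc" using G_Vc[OF R vj_Vc] y by simp
  moreover have "(norm y)^2 \<le> (real d - 1) * kk d" using y G_norm[OF R] norm_vj_sq by simp
  moreover have "\<forall>i. y $ i \<ge> - 1 / (real d)^2" using y Rvj_nth[OF R] by simp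
  ultimately show "y \<in> Dset d" by (simp add: Dset_def)
qed

lemma PS_inv: "R \<in> G \<Longrightarrow> y \<in> PS d G \<Longrightarrow> R *v y \<in> PS d G"
proof -
  assume R: "R \<in> G" and "y \<in> PS d G"
  then obtain R' j where R': "R' \<in> G" and y: "y = R' *v vj d j" by (auto simp: PS_def)
  have "R *v y = (R ** R') *v vj d j" using y by (simp add: matrix_vector_mul_assoc)
  moreover have "R ** R' \<in> G" using G_mul[OF R R'] .
  ultimately show ?thesis unfolding PS_def by blast
qed

lemma BallS_inv: "R \<in> G \<Longrightarrow> y \<in> BallS d \<Longrightarrow> R *v y \<in> BallS d"
  by (auto simp: BallS_def G_norm G_Vc)

lemma Ball_Ball: "x \<in> BallS d \<Longrightarrow> y \<in> BallS d \<Longrightarrow> inner x y \<ge> - kk d"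
proof -
  assume x: "x \<in> BallS d" and y: "y \<in> BallS d"
  have "(norm x)^2 * (norm y)^2 \<le> kk d * kk d"
    by (rule mult_mono) (use x y kk_le in \<open>auto simp: BallS_def\<close>)
  then show ?thesis by (intro pair_bound) (simp add: power2_eq_square)
qed

lemma Ball_PS: "x \<in> BallS d \<Longrightarrow> y \<in> PS d G \<Longrightarrow> inner x y \<ge> - kk d"
proof -
  assume x: "x \<in> BallS d" and y: "y \<in> PS d G"
  have ny: "(norm y)^2 \<le> (real d - 1) * kk d" using y PS_D by (auto simp: Dset_def)
  have "(norm x)^2 * (norm y)^2 \<le> kk d / (real d - 1) * ((real d - 1) * kk d)"
    by (rule mult_mono) (use x ny kk_le in \<open>auto simp: BallS_def\<close>)
  also have "\<dots> = (kk d)^2" using d2 by (simp add: power2_eq_square)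
  finally show ?thesis by (intro pair_bound)
qed

lemma PS_PS: "x \<in> PS d G \<Longrightarrow> y \<in> PS d G \<Longrightarrow> inner x y \<ge> - kk d"
proof -
  assume "x \<in> PS d G" "y \<in> PS d G"
  then obtain R j R' l where R: "R \<in> G" "R' \<in> G" and xy: "x = R *v vj d j" "y = R' *v vj d l"
    by (auto simp: PS_def)
  define M where "M = matrix_inv R ** R'"
  have M: "M \<in> G" unfolding M_def using R by (intro G_mul G_inv)
  have "inner x y = inner (vj d j) (M *v vj d l)"
    using xy R by (simp add: G_adj M_def matrix_vector_mul_assoc)
  also have "\<dots> = (M *v vj d l) $ j / (real d + 1)"
    by (rule inner_vj) (rule G_Vc[OF M vj_Vc])
  also have "\<dots> \<ge> (- 1 / (real d)^2) / (real d + 1)"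
    by (intro divide_right_mono Rvj_nth[OF M]) simp
  finally show ?thesis by (simp add: kk_def)
qed

lemma S0_Fam: "BallS d \<union> PS d G \<in> Fam d G"
  unfolding Fam_def
proof (intro CollectI conjI ballI)
  show "BallS d \<union> PS d G \<subseteq> BallS d \<union> PS d G" by simp
  show "BallS d \<union> PS d G \<subseteq> Dset d" using BallS_D PS_D by blast
  fix x y assume x: "x \<in> BallS d \<union> PS d G" and y: "y \<in> BallS d \<union> PS d G"
  show "- kk d \<le> inner x y"
  proof (cases "x \<in> BallS d")
    case True
    then show ?thesis using y Ball_Ball Ball_PS by blast
  next
    case False
    then have xP: "x \<in> PS d G" using x by blast
    show ?thesis
    proof (cases "y \<in> BallS d")
      case True then show ?thesis using xP Ball_PS[of y x] by (simp add: inner_commute)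
    next
      case False then show ?thesis using xP y PS_PS by blast
    qed
  qed
next
  fix R x assume "R \<in> G" "x \<in> BallS d \<union> PS d G"
  then show "R *v x \<in> BallS d \<union> PS d G" using BallS_inv PS_inv by blast
qed

lemma Fam_max: "\<exists>S\<in>Fam d G. \<forall>X\<in>Fam d G. S \<subseteq> X \<longrightarrow> X = S"
proof (rule Zorn_Lemma2, intro ballI)
  fix C assume C: "C \<in> chains (Fam d G)"
  show "\<exists>U\<in>Fam d G. \<forall>X\<in>C. X \<subseteq> U"
  proof (cases "C = {}")
    case True then show ?thesis using S0_Fam by auto
  next
    case False
    have CF: "C \<subseteq> Fam d G" and ch: "chain\<^sub>\<subseteq> C" using C by (auto simp: chains_def)
    have "\<Union>C \<in> Fam d G"
      unfolding Fam_def
    proof (intro CollectI conjI ballI)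
      obtain X where "X \<in> C" using False by auto
      then show "BallS d \<union> PS d G \<subseteq> \<Union>C" using CF unfolding Fam_def by blast
      show "\<Union>C \<subseteq> Dset d" using CF by (auto simp: Fam_def)
      fix x y assume x: "x \<in> \<Union>C" and y: "y \<in> \<Union>C"
      then obtain X Y where XY: "X \<in> C" "Y \<in> C" "x \<in> X" "y \<in> Y" by auto
      then have "X \<subseteq> Y \<or> Y \<subseteq> X" using ch by (auto simp: chain_subset_def)
      moreover have "\<forall>a\<in>X. \<forall>b\<in>X. - kk d \<le> inner a b" "\<forall>a\<in>Y. \<forall>b\<in>Y. - kk d \<le> inner a b"
        using XY CF unfolding Fam_def by blast+
      ultimately show "inner x y \<ge> - kk d" using XY by blast
    next
      fix R x assume "R \<in> G" "x \<in> \<Union>C"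
      then obtain X where "X \<in> C" "x \<in> X" "R \<in> G" by auto
      moreover then have "R *v x \<in> X" using CF unfolding Fam_def by blast
      ultimately show "R *v x \<in> \<Union>C" by blast
    qed
    then show ?thesis by auto
  qed
qed


lemma Fam_sub: "S \<in> Fam d G \<Longrightarrow> BallS d \<subseteq> S" "S \<in> Fam d G \<Longrightarrow> PS d G \<subseteq> S"
  "S \<in> Fam d G \<Longrightarrow> S \<subseteq> Dset d"
  "S \<in> Fam d G \<Longrightarrow> x \<in> S \<Longrightarrow> y \<in> S \<Longrightarrow> inner x y \<ge> - kk d"
  "S \<in> Fam d G \<Longrightarrow> R \<in> G \<Longrightarrow> x \<in> S \<Longrightarrow> R *v x \<in> S"
  unfolding Fam_def by blast+

lemma vj_PS: "vj d j \<in> PS d G"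
proof -
  have "vj d j = mat 1 *v vj d j" by simp
  then show ?thesis unfolding PS_def using G_one by blast
qed

lemma cpol_D:
  assumes SF: "S \<in> Fam d G"
  shows "cpol (kk d) S \<subseteq> Dset d"
proof
  fix y assume yc: "y \<in> cpol (kk d) S"
  then have yV: "y \<in> Vc" and yS: "\<And>x. x \<in> S \<Longrightarrow> inner y x \<ge> - kk d" by (auto simp: cpol_def)
  have dd: "real d \<ge> 2" using d2 by simp
  have "\<forall>j. y $ j \<ge> - 1 / (real d)^2"
  proof
    fix j
    have "vj d j \<in> S" using Fam_sub(2)[OF SF] vj_PS by blast
    then have "- kk d \<le> inner y (vj d j)" by (rule yS)
    then have "- kk d \<le> inner (vj d j) y" by (simp add: inner_commute)
    also have "\<dots> = y $ j / (real d + 1)" by (rule inner_vj[OF yV])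
    finally have "- kk d * (real d + 1) \<le> y $ j" using dd by (simp add: le_divide_eq)
    moreover have "- kk d * (real d + 1) = - 1 / (real d)^2" using dd by (simp add: kk_def)
    ultimately show "y $ j \<ge> - 1 / (real d)^2" by simp
  qed
  moreover have "(norm y)^2 \<le> (real d - 1) * kk d"
  proof (rule ccontr)
    assume "\<not> ?thesis"
    then have gt: "(norm y)^2 > (real d - 1) * kk d" by simp
    define a where "a = (norm y)^2"
    define b where "b = (real d - 1) * kk d"
    define s where "s = 2 * kk d / (a + b)"
    have bpos: "b > 0" using dd kk_pos by (simp add: b_def)
    have h1: "s^2 * a \<le> kk d * kk d / b" "s * a > kk d"
      unfolding s_def using b1[OF kk_pos bpos] gt by (auto simp: a_def b_def)
    have e: "kk d * kk d / b = kk d / (real d - 1)" using kk_pos dd by (simp add: b_def)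
    define w where "w = (- s) *\<^sub>R y"
    have "w \<in> BallS d"
      using yV h1(1) e by (simp add: BallS_def w_def Vc_def power_mult_distrib a_def)
    then have "w \<in> S" using Fam_sub(1)[OF SF] by blast
    then have "inner y w \<ge> - kk d" by (rule yS)
    moreover have "inner y w = - (s * a)" by (simp add: w_def a_def power2_norm_eq_inner)
    ultimately show False using h1(2) by simp
  qed
  ultimately show "y \<in> Dset d" using yV by (simp add: Dset_def)
qed

lemma cpol_inv:
  assumes SF: "S \<in> Fam d G" and R: "R \<in> G" and y: "y \<in> cpol (kk d) S"
  shows "R *v y \<in> cpol (kk d) S"
proof -
  have "R *v y \<in> Vc" using y G_Vc[OF R] by (simp add: cpol_def)
  moreover have "\<forall>x\<in>S. inner (R *v y) x \<ge> - kk d"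
  proof
    fix x assume x: "x \<in> S"
    have "matrix_inv R *v x \<in> S" using Fam_sub(5)[OF SF G_inv[OF R] x] .
    then show "inner (R *v y) x \<ge> - kk d" using y by (simp add: G_adj[OF R] cpol_def)
  qed
  ultimately show ?thesis by (simp add: cpol_def)
qed

lemma add_orbit:
  assumes SF: "S \<in> Fam d G" and Smax: "\<forall>X\<in>Fam d G. S \<subseteq> X \<longrightarrow> X = S"
    and w: "w \<in> cpol (kk d) S" and wc: "\<forall>M\<in>G. inner w (M *v w) \<ge> - kk d"
  shows "w \<in> S"
proof -
  define S' where "S' = S \<union> (\<lambda>R. R *v w) ` G"
  have orb: "\<And>R. R \<in> G \<Longrightarrow> R *v w \<in> cpol (kk d) S" using cpol_inv[OF SF _ w] .
  have "S' \<in> Fam d G"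
    unfolding Fam_def
  proof (intro CollectI conjI ballI)
    show "BallS d \<union> PS d G \<subseteq> S'" using Fam_sub(1,2)[OF SF] by (auto simp: S'_def)
    show "S' \<subseteq> Dset d" using Fam_sub(3)[OF SF] orb cpol_D[OF SF] by (auto simp: S'_def)
  next
    fix x y assume x: "x \<in> S'" and y: "y \<in> S'"
    show "inner x y \<ge> - kk d"
    proof (cases "x \<in> S")
      case xS: True
      show ?thesis
      proof (cases "y \<in> S")
        case True then show ?thesis using xS Fam_sub(4)[OF SF] by blast
      next
        case False
        then obtain R where R: "R \<in> G" "y = R *v w" using y by (auto simp: S'_def)
        then have "inner y x \<ge> - kk d" using orb[OF R(1)] xS by (auto simp: cpol_def)
        then show ?thesis by (simp add: inner_commute)
      qed
    next
      case False
      then obtain R where R: "R \<in> G" "x = R *v w" using x by (auto simp: S'_def)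
      show ?thesis
      proof (cases "y \<in> S")
        case True then show ?thesis using orb[OF R(1)] R(2) by (auto simp: cpol_def)
      next
        case False
        then obtain R' where R': "R' \<in> G" "y = R' *v w" using y by (auto simp: S'_def)
        have "inner x y = inner w ((matrix_inv R ** R') *v w)"
          using R R' by (simp add: G_adj matrix_vector_mul_assoc)
        also have "\<dots> \<ge> - kk d" using wc G_mul[OF G_inv[OF R(1)] R'(1)] by blast
        finally show ?thesis .
      qed
    qed
  next
    fix R x assume R: "R \<in> G" and x: "x \<in> S'"
    show "R *v x \<in> S'"
    proof (cases "x \<in> S")
      case True then show ?thesis using Fam_sub(5)[OF SF R] by (auto simp: S'_def)
    next
      case False
      then obtain R' where R': "R' \<in> G" "x = R' *v w" using x by (auto simp: S'_def)
      then have "R *v x = (R ** R') *v w" by (simp add: matrix_vector_mul_assoc)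
      then show ?thesis using G_mul[OF R R'(1)] by (auto simp: S'_def)
    qed
  qed
  moreover have "S \<subseteq> S'" by (auto simp: S'_def)
  ultimately have "S' = S" using Smax by blast
  moreover have "w \<in> S'" using G_one by (auto simp: S'_def image_iff intro!: bexI[of _ "mat 1"])
  ultimately show ?thesis by simp
qed


lemma orbit_ok:
  assumes SF: "S \<in> Fam d G" and Smax: "\<forall>X\<in>Fam d G. S \<subseteq> X \<longrightarrow> X = S"
    and y: "y \<in> cpol (kk d) S" and M0: "M0 \<in> G"
  shows "inner y (M0 *v y) \<ge> - kk d"
proof (rule ccontr)
  assume "\<not> ?thesis"
  then have bad: "- inner y (M0 *v y) > kk d" by simp
  define F where "F = (\<lambda>M. - inner y (M *v y)) ` G"
  have bnd: "\<And>M. M \<in> G \<Longrightarrow> - inner y (M *v y) \<le> (norm y)^2"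
  proof -
    fix M assume M: "M \<in> G"
    have "inner (-y) (M *v y) \<le> norm (-y) * norm (M *v y)" by (rule norm_cauchy_schwarz)
    then show "- inner y (M *v y) \<le> (norm y)^2" using G_norm[OF M] by (simp add: power2_eq_square)
  qed
  have Fne: "F \<noteq> {}" using M0 by (auto simp: F_def)
  have Fbdd: "bdd_above F" unfolding F_def using bnd by (intro bdd_aboveI2) auto
  define m where "m = Sup F"
  have le_m: "\<And>M. M \<in> G \<Longrightarrow> - inner y (M *v y) \<le> m"
    unfolding m_def F_def using Fbdd by (intro cSup_upper) (auto simp: F_def)
  have m_gt: "m > kk d" using le_m[OF M0] bad by simp
  have kp: "kk d > 0" by (rule kk_pos)
  have mp: "m > 0" using m_gt kp by simp
  have "kk d * m < m * m" using m_gt mp by simp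
  then have "sqrt (kk d * m) < sqrt (m * m)" by (simp only: real_sqrt_less_iff)
  then have sq_lt: "sqrt (kk d * m) < m" using mp by simp
  then have "sqrt (kk d * m) < Sup F" by (simp add: m_def)
  then obtain M where M: "M \<in> G" and Mgt: "- inner y (M *v y) > sqrt (kk d * m)"
    using less_cSup_iff[OF Fne Fbdd] by (auto simp: F_def)
  define t where "t = sqrt (kk d / m)"
  have tpos: "t > 0" using kp mp by (simp add: t_def)
  have tle: "t \<le> 1" using m_gt kp by (simp add: t_def)
  have t2: "t^2 = kk d / m" using kp mp by (simp add: t_def)
  define w where "w = t *\<^sub>R (M *v y)"
  have My: "M *v y \<in> cpol (kk d) S" by (rule cpol_inv[OF SF M y])
  have wc: "w \<in> cpol (kk d) S"
  proof -
    have "w \<in> Vc" using My by (simp add: w_def cpol_def Vc_def)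
    moreover have "\<forall>x\<in>S. inner w x \<ge> - kk d"
    proof
      fix x assume "x \<in> S"
      then have h: "inner (M *v y) x \<ge> - kk d" using My by (simp add: cpol_def)
      have "t * (- kk d) \<le> t * inner (M *v y) x" using h tpos by (intro mult_left_mono) auto
      moreover have "- kk d \<le> t * (- kk d)" using tle kp by (simp add: mult_le_cancel_right1)
      ultimately show "inner w x \<ge> - kk d" by (simp add: w_def)
    qed
    ultimately show ?thesis by (simp add: cpol_def)
  qed
  have wok: "\<forall>M'\<in>G. inner w (M' *v w) \<ge> - kk d"
  proof
    fix M' assume M': "M' \<in> G"
    define N where "N = matrix_inv M ** M' ** M"
    have N: "N \<in> G" unfolding N_def using M M' by (intro G_mul G_inv)
    have "inner w (M' *v w) = t^2 * inner (M *v y) (M' *v (M *v y))"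
      by (simp add: w_def matrix_vector_mult_scaleR power2_eq_square)
    also have "inner (M *v y) (M' *v (M *v y)) = inner y (N *v y)"
      by (simp add: G_adj[OF M] N_def matrix_vector_mul_assoc matrix_mul_assoc)
    finally have e: "inner w (M' *v w) = t^2 * inner y (N *v y)" .
    have "t^2 * (- m) \<le> t^2 * inner y (N *v y)" using le_m[OF N] by (intro mult_left_mono) auto
    moreover have "t^2 * (- m) = - kk d" using t2 mp by simp
    ultimately show "inner w (M' *v w) \<ge> - kk d" using e by simp
  qed
  have "w \<in> S" by (rule add_orbit[OF SF Smax wc wok])
  then have "inner y w \<ge> - kk d" using y by (simp add: cpol_def)
  moreover have "inner y w = - (t * (- inner y (M *v y)))" by (simp add: w_def)
  moreover have "t * (- inner y (M *v y)) > t * sqrt (kk d * m)" using Mgt tpos by (rule mult_strict_left_mono)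
  moreover have "t * sqrt (kk d * m) = kk d"
  proof -
    have "t * sqrt (kk d * m) = sqrt (kk d / m * (kk d * m))" unfolding t_def by (rule real_sqrt_mult[symmetric])
    also have "kk d / m * (kk d * m) = kk d * kk d" using mp by simp
    finally show ?thesis using kp by simp
  qed
  ultimately show False by linarith
qed

lemma cpol_eq:
  assumes SF: "S \<in> Fam d G" and Smax: "\<forall>X\<in>Fam d G. S \<subseteq> X \<longrightarrow> X = S"
  shows "cpol (kk d) S = S"
proof
  show "cpol (kk d) S \<subseteq> S"
    using add_orbit[OF SF Smax] orbit_ok[OF SF Smax] by blast
  show "S \<subseteq> cpol (kk d) S"
    using Fam_sub(3,4)[OF SF] by (auto simp: cpol_def Dset_def)
qed


lemma Hplane_iff: "(u::real^'n) \<in> Hplane \<longleftrightarrow> u - cvec \<in> Vc"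
proof -
  have "u \<in> Hplane \<longleftrightarrow> real CARD('n) * inner cvec u = 1" by (simp add: Hplane_def sum_cvec)
  also have "\<dots> \<longleftrightarrow> inner cvec u = 1 / real CARD('n)"
  proof -
    have cpos: "real CARD('n) \<noteq> 0" by simp
    show ?thesis using cpos by (simp add: eq_divide_eq mult.commute)
  qed
  also have "\<dots> \<longleftrightarrow> u - cvec \<in> Vc" by (simp add: Vc_def inner_diff_right inner_cvec_cvec)
  finally show ?thesis .
qed

lemma inner_shift: "(x::real^'n) \<in> Vc \<Longrightarrow> y \<in> Vc \<Longrightarrow> inner (y + cvec) (x + (cvec::real^'n)) = inner y x + 1 / (real d)^2"
proof -
  assume x: "x \<in> Vc" and y: "y \<in> Vc"
  have "inner (y + cvec) (x + cvec) = inner y x + inner y cvec + (inner cvec x + inner (cvec::real^'n) cvec)"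
    by (simp add: inner_add_left inner_add_right)
  also have "inner y cvec = 0" using y by (simp add: Vc_def inner_commute)
  also have "inner cvec x = 0" using x by (simp add: Vc_def)
  finally show ?thesis by (simp add: inner_cvec_cvec cardR)
qed

lemma sumq: "(q::real^'n) \<in> Hplane \<Longrightarrow> (\<Sum>j\<in>UNIV. q $ j) = 1" by (simp add: Hplane_def)

definition rmeas :: "nat \<Rightarrow> real^'n^'n \<Rightarrow> real^'n^'n" where
  "rmeas dd R = (\<chi> i j. (R $ i $ j + 1 / real dd) / (real dd + 1))"

lemma rsum: "R \<in> G \<Longrightarrow> (\<Sum>k\<in>UNIV. rmeas d R $ i $ k) = 1"
proof -
  assume R: "R \<in> G"
  have "(\<Sum>k\<in>UNIV. rmeas d R $ i $ k) = (\<Sum>k\<in>UNIV. R $ i $ k + 1 / real d) / (real d + 1)"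
    by (simp add: rmeas_def sum_divide_distrib)
  also have "\<dots> = ((\<Sum>k\<in>UNIV. R $ i $ k) + real CARD('n) * (1 / real d)) / (real d + 1)"
    by (simp only: sum.distrib sum_constant)
  also have "\<dots> = 1" using G_rowsum[OF R] a8[of "real d"] d2 by (simp add: cardR)
  finally show ?thesis .
qed

lemma r_meas: "R \<in> G \<Longrightarrow> measurement (rmeas d R)"
proof -
  assume R: "R \<in> G"
  have "\<forall>i j. rmeas d R $ i $ j \<ge> 0"
  proof (intro allI)
    fix i j
    have "R $ i $ j + 1 / real d \<ge> 0" using G_ent[OF R, of i j] by simp
    then show "rmeas d R $ i $ j \<ge> 0" by (simp add: rmeas_def)
  qed
  moreover have "\<forall>j. (\<Sum>i\<in>UNIV. rmeas d R $ i $ j) = 1"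
  proof
    fix j
    have "(\<Sum>i\<in>UNIV. rmeas d R $ i $ j) = (\<Sum>i\<in>UNIV. R $ i $ j + 1 / real d) / (real d + 1)"
      by (simp add: rmeas_def sum_divide_distrib)
    also have "\<dots> = ((\<Sum>i\<in>UNIV. R $ i $ j) + real CARD('n) * (1 / real d)) / (real d + 1)"
      by (simp only: sum.distrib sum_constant)
    also have "\<dots> = 1" using G_colsum[OF R] a8[of "real d"] d2 by (simp add: cardR)
    finally show "(\<Sum>i\<in>UNIV. rmeas d R $ i $ j) = 1" .
  qed
  ultimately show ?thesis by (simp add: measurement_def)
qed

lemma r_stretched: "R \<in> G \<Longrightarrow> stretched d (rmeas d R) = R"
proof -
  assume R: "R \<in> G"
  show ?thesis
    unfolding stretched_def vec_eq_iff
  proof (intro allI)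
    fix i j
    have "(real d + 1) * rmeas d R $ i $ j - 1 / real d * (\<Sum>k\<in>UNIV. rmeas d R $ i $ k) = R $ i $ j"
      unfolding rsum[OF R] using a9[of "real d" "R $ i $ j"] d2 by (simp add: rmeas_def)
    then show "(\<chi> i j. (real d + 1) * rmeas d R $ i $ j - 1 / real d * (\<Sum>k\<in>UNIV. rmeas d R $ i $ k)) $ i $ j = R $ i $ j"
      by simp
  qed
qed

lemma r_apply: "R \<in> G \<Longrightarrow> q \<in> Hplane \<Longrightarrow> meas_apply d (rmeas d R) q = R *v q"
proof -
  assume R: "R \<in> G" and q: "q \<in> Hplane"
  have dd: "real d \<ge> 2" using d2 by simp
  show ?thesis
    unfolding meas_apply_def vec_eq_iff
  proof (intro allI)
    fix i
    have "(\<Sum>j\<in>UNIV. ((real d + 1) * q $ j - 1 / real d) * rmeas d R $ i $ j)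
        = (\<Sum>j\<in>UNIV. q $ j * R $ i $ j + q $ j / real d - R $ i $ j / (real d * (real d + 1)) - 1 / ((real d)^2 * (real d + 1)))"
      by (intro sum.cong refl) (simp only: rmeas_def vec_lambda_beta a6[OF dd])
    also have "\<dots> = (\<Sum>j\<in>UNIV. q $ j * R $ i $ j) + (\<Sum>j\<in>UNIV. q $ j) / real d
        - (\<Sum>j\<in>UNIV. R $ i $ j) / (real d * (real d + 1)) - real CARD('n) * (1 / ((real d)^2 * (real d + 1)))"
      by (simp add: sum.distrib sum_subtractf sum_divide_distrib)
    also have "\<dots> = (\<Sum>j\<in>UNIV. q $ j * R $ i $ j) + (1 / real d - 1 / (real d * (real d + 1)) - (real d)^2 / ((real d)^2 * (real d + 1)))"
      using sumq[OF q] G_rowsum[OF R] by (simp add: cardR)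
    also have "\<dots> = (R *v q) $ i" using a7[OF dd] by (simp add: matrix_vector_mult_def mult.commute)
    finally show "(\<chi> i. \<Sum>j\<in>UNIV. ((real d + 1) * q $ j - 1 / real d) * rmeas d R $ i $ j) $ i = (R *v q) $ i"
      by simp
  qed
qed

lemma main_exists: "\<exists>Q :: (real^'n) set. qplex d Q \<and> G \<subseteq> preservation_group d Q"
proof -
  obtain S where SF: "S \<in> Fam d G" and Smax: "\<forall>X\<in>Fam d G. S \<subseteq> X \<longrightarrow> X = S"
    using Fam_max by blast
  have dd: "real d \<ge> 2" using d2 by simp
  have SD: "S \<subseteq> Dset d" by (rule Fam_sub(3)[OF SF])
  have SV: "\<And>x. x \<in> S \<Longrightarrow> x \<in> Vc" using SD by (auto simp: Dset_def)
  define Q where "Q = (\<lambda>x. x + cvec) ` S"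
  have QH: "Q \<subseteq> Hplane" using SV by (auto simp: Q_def Hplane_iff)
  have "Q \<subseteq> Simplex \<inter> out_ball d"
  proof
    fix u assume "u \<in> Q"
    then obtain x where x: "x \<in> S" and u: "u = x + cvec" by (auto simp: Q_def)
    have uH: "u \<in> Hplane" using QH \<open>u \<in> Q\<close> by blast
    have xD: "x \<in> Dset d" using SD x by blast
    have "\<forall>i. u $ i \<ge> 0"
    proof
      fix i
      have "x $ i \<ge> - 1 / (real d)^2" using xD by (simp add: Dset_def)
      then show "u $ i \<ge> 0" by (simp add: u cvec_nth cardR)
    qed
    moreover have "(norm (u - cvec))^2 \<le> out_radius_sq d"
      using xD by (simp add: u Dset_def out_radius_sq_def kk_def)
    ultimately show "u \<in> Simplex \<inter> out_ball d" using uH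
      by (auto simp: Simplex_def out_ball_def Hplane_def)
  qed
  moreover have "polar d Q = Q"
  proof
    show "polar d Q \<subseteq> Q"
    proof
      fix u assume u: "u \<in> polar d Q"
      then have uH: "u \<in> Hplane" by (simp add: polar_def)
      define y where "y = u - cvec"
      have yV: "y \<in> Vc" using uH by (simp add: Hplane_iff y_def)
      have "y \<in> cpol (kk d) S"
        unfolding cpol_def
      proof (intro CollectI conjI ballI yV)
        fix x assume x: "x \<in> S"
        have "1 / (real d * (real d + 1)) \<le> inner u (x + cvec)"
          using u x by (auto simp: polar_def Q_def)
        also have "inner u (x + cvec) = inner y x + 1 / (real d)^2"
          using inner_shift[OF SV[OF x] yV] by (simp add: y_def)
        finally show "inner y x \<ge> - kk d" using a5[OF dd] by (simp add: kk_def)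
      qed
      then have "y \<in> S" using cpol_eq[OF SF Smax] by simp
      then show "u \<in> Q" by (auto simp: Q_def y_def image_iff intro!: bexI[of _ y])
    qed
    show "Q \<subseteq> polar d Q"
    proof
      fix u assume uQ: "u \<in> Q"
      then obtain y where y: "y \<in> S" and u: "u = y + cvec" by (auto simp: Q_def)
      have "\<forall>v\<in>Q. inner u v \<ge> 1 / (real d * (real d + 1))"
      proof
        fix v assume "v \<in> Q"
        then obtain x where x: "x \<in> S" and v: "v = x + cvec" by (auto simp: Q_def)
        have "inner y x \<ge> - kk d" using Fam_sub(4)[OF SF y x] .
        then show "inner u v \<ge> 1 / (real d * (real d + 1))"
          using inner_shift[OF SV[OF x] SV[OF y]] a5[OF dd] by (simp add: u v kk_def)
      qed
      then show "u \<in> polar d Q" using QH uQ by (auto simp: polar_def)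
    qed
  qed
  moreover have "G \<subseteq> preservation_group d Q"
  proof
    fix R assume R: "R \<in> G"
    have img: "meas_apply d (rmeas d R) ` Q = Q"
    proof -
      have "meas_apply d (rmeas d R) ` Q = (\<lambda>q. R *v q) ` Q"
        using r_apply[OF R] QH by (intro image_cong) auto
      also have "\<dots> = Q"
      proof
        show "(\<lambda>q. R *v q) ` Q \<subseteq> Q"
        proof
          fix v assume "v \<in> (\<lambda>q. R *v q) ` Q"
          then obtain x where x: "x \<in> S" and v: "v = R *v (x + cvec)" by (auto simp: Q_def)
          have "v = R *v x + cvec" using G_c[OF R] by (simp add: v matrix_vector_right_distrib)
          moreover have "R *v x \<in> S" using Fam_sub(5)[OF SF R x] .
          ultimately show "v \<in> Q" by (auto simp: Q_def)
        qed
        show "Q \<subseteq> (\<lambda>q. R *v q) ` Q"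
        proof
          fix v assume "v \<in> Q"
          then obtain x where x: "x \<in> S" and v: "v = x + cvec" by (auto simp: Q_def)
          define x' where "x' = matrix_inv R *v x"
          have x'S: "x' \<in> S" using Fam_sub(5)[OF SF G_inv[OF R] x] by (simp add: x'_def)
          have "R *v (x' + cvec) = v"
            using G_c[OF R] G_cancel[OF R] by (simp add: v x'_def matrix_vector_right_distrib)
          moreover have "x' + cvec \<in> Q" using x'S by (auto simp: Q_def)
          ultimately show "v \<in> (\<lambda>q. R *v q) ` Q" by (auto intro!: image_eqI[of _ _ "x' + cvec"])
        qed
      qed
      finally show ?thesis .
    qed
    have "Q_preserving d Q (rmeas d R)" using r_meas[OF R] img by (simp add: Q_preserving_def)
    then show "R \<in> preservation_group d Q"
      unfolding preservation_group_def using r_stretched[OF R] by (auto intro!: exI[of _ "rmeas d R"])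
  qed
  ultimately show ?thesis unfolding qplex_def by blast
qed

end
theorem mainTheorem14:
  fixes d :: nat and G :: "(real^'n^'n) set"
  assumes "d \<ge> 2" and "CARD('n) = d^2"
    and "stochastic_subgroup d G"
  shows "\<exists>Q :: (real^'n) set. qplex d Q \<and> G \<subseteq> preservation_group d Q"
  using main_exists[OF assms] .

end
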